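(* Let $G=(V,E)$ be a graph, let $H\subseteq G$ be a clique (complete subgraph), and let $G'=(V\cup\{v'\},E')$ be obtained by adding a new vertex $v'$ adjacent to every vertex of $H$ and to no other vertex of $G$. If $G'$ is generically globally rigid in $\mathbb{R}^d$, then $G$ is generically globally rigid in $\mathbb{R}^d$.
   Context: A framework is a pair $(G,\mathbf{p})$ with $\mathbf{p}:V\to\mathbb{R}^d$. Frameworks $(G,\mathbf{p})$, $(G,\mathbf{q})$ are equivalent if $\|\mathbf{p}(u)-\mathbf{p}(v)\|=\|\mathbf{q}(u)-\mathbf{q}(v)\|$ for every edge $(u,v)$, and congruent if this holds for all $u,v\in V$. $(G,\mathbf{p})$ is globally rigid if every framework equivalent to it is congruent to it. A configuration is generic if its coordinates satisfy no nontrivial polynomial equation with rational coefficients; $G$ is generically globally rigid in $\mathbb{R}^d$ if every generic $d$-dimensional framework of $G$ is globally rigid (global rigidity is known to be a generic property: either all or no generic configurations of a graph are globally rigid). *)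

theory Defs
  imports "HOL-Analysis.Analysis"
begin

definition simple_graph :: "'a set \<Rightarrow> 'a set set \<Rightarrow> bool" where
  "simple_graph V E \<longleftrightarrow> finite V \<and> (\<forall>e\<in>E. e \<subseteq> V \<and> card e = 2)"

text \<open>A polynomial is given by a finite set M of distinct exponent vectors
  supported in a finite set S of variables, with rational coefficients c.\<close>
definition alg_indep_over_rat :: "'i set \<Rightarrow> ('i \<Rightarrow> real) \<Rightarrow> bool" where
  "alg_indep_over_rat J x \<longleftrightarrow>
     (\<forall>S M (c :: ('i \<Rightarrow> nat) \<Rightarrow> rat).
        finite S \<and> S \<subseteq> J \<and> finite M \<and> (\<forall>m\<in>M. \<forall>j. j \<notin> S \<longrightarrow> m j = 0) \<and>
        (\<Sum>m\<in>M. of_rat (c m) * (\<Prod>j\<in>S. x j ^ m j)) = 0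
        \<longrightarrow> (\<forall>m\<in>M. c m = 0))"

definition generic_config :: "'a set \<Rightarrow> ('a \<Rightarrow> real ^ 'd) \<Rightarrow> bool" where
  "generic_config V p \<longleftrightarrow> alg_indep_over_rat (V \<times> UNIV) (\<lambda>(v, i). p v $ i)"

definition equivalent_frameworks ::
    "'a set set \<Rightarrow> ('a \<Rightarrow> real ^ 'd) \<Rightarrow> ('a \<Rightarrow> real ^ 'd) \<Rightarrow> bool" where
  "equivalent_frameworks E p q \<longleftrightarrow>
     (\<forall>u v. {u, v} \<in> E \<longrightarrow> dist (p u) (p v) = dist (q u) (q v))"

definition congruent_frameworks ::
    "'a set \<Rightarrow> ('a \<Rightarrow> real ^ 'd) \<Rightarrow> ('a \<Rightarrow> real ^ 'd) \<Rightarrow> bool" where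
  "congruent_frameworks V p q \<longleftrightarrow>
     (\<forall>u\<in>V. \<forall>v\<in>V. dist (p u) (p v) = dist (q u) (q v))"

definition globally_rigid ::
    "'a set \<Rightarrow> 'a set set \<Rightarrow> ('a \<Rightarrow> real ^ 'd) \<Rightarrow> bool" where
  "globally_rigid V E p \<longleftrightarrow>
     (\<forall>q :: 'a \<Rightarrow> real ^ 'd. equivalent_frameworks E p q \<longrightarrow> congruent_frameworks V p q)"

text \<open>Generic global rigidity in R^d, where d = CARD('d) is carried by the type.\<close>
definition gen_globally_rigid ::
    "'a set \<Rightarrow> 'a set set \<Rightarrow> ('d::finite) itself \<Rightarrow> bool" where
  "gen_globally_rigid V E (_ :: 'd itself) \<longleftrightarrow>
     (\<forall>p :: 'a \<Rightarrow> real ^ 'd. generic_config V p \<longrightarrow> globally_rigid V E p)"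

definition is_clique :: "'a set set \<Rightarrow> 'a set \<Rightarrow> bool" where
  "is_clique E H \<longleftrightarrow> (\<forall>u\<in>H. \<forall>v\<in>H. u \<noteq> v \<longrightarrow> {u, v} \<in> E)"

end

theory Submission
  imports Defs "HOL-Computational_Algebra.Polynomial" "HOL-Library.Countable_Set"
begin


definition XX :: "'i set \<Rightarrow> ('i \<Rightarrow> real) \<Rightarrow> ('i \<Rightarrow> nat) \<Rightarrow> real" where
  "XX J x m = (\<Prod>j\<in>J. x j ^ m j)"

definition ZZ :: "'i set \<Rightarrow> ('i \<Rightarrow> nat) set" where
  "ZZ J = {m. \<forall>j. j \<notin> J \<longrightarrow> m j = 0}"

definition FF :: "'i set \<Rightarrow> ('i \<Rightarrow> real) \<Rightarrow> real set" where
  "FF J x = {\<Sum>m\<in>M. of_rat (c m) * XX J x m | M c. finite M \<and> M \<subseteq> ZZ J}"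

lemma countable_ZZ:
  assumes "finite J" shows "countable (ZZ J)"
proof -
  obtain xs where xs: "set xs = J" using assms finite_list by blast
  have "inj_on (\<lambda>m. map m xs) (ZZ J)"
  proof (rule inj_onI)
    fix m m' assume "m \<in> ZZ J" "m' \<in> ZZ J" "map m xs = map m' xs"
    then show "m = m'" using xs by (auto simp: ZZ_def fun_eq_iff map_eq_conv)
  qed
  then show ?thesis
    by (rule countable_image_inj_on[rotated]) (rule countable_subset[OF subset_UNIV], simp)
qed

lemma countable_FF:
  assumes "finite J" shows "countable (FF J x)"
proof -
  let ?T = "{T. finite T \<and> T \<subseteq> ZZ J \<times> (UNIV :: rat set)}"
  let ?g = "\<lambda>T. \<Sum>(m,r)\<in>T. of_rat r * XX J x m"
  have "countable ?T"
    by (rule countable_Collect_finite_subset) (use countable_ZZ[OF assms] in auto)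
  moreover have "FF J x \<subseteq> ?g ` ?T"
  proof
    fix v assume "v \<in> FF J x"
    then obtain M c where v: "v = (\<Sum>m\<in>M. of_rat (c m) * XX J x m)" "finite M" "M \<subseteq> ZZ J"
      unfolding FF_def by blast
    have inj: "inj_on (\<lambda>m. (m, c m)) M" by (auto intro: inj_onI)
    have "?g ((\<lambda>m. (m, c m)) ` M) = v"
      by (subst sum.reindex[OF inj]) (simp add: v)
    moreover have "(\<lambda>m. (m, c m)) ` M \<in> ?T" using v by auto
    ultimately show "v \<in> ?g ` ?T" by blast
  qed
  ultimately show ?thesis by (meson countable_image countable_subset)
qed

lemma countable_polys:
  assumes "countable F" "0 \<in> F"
  shows "countable {p :: real poly. \<forall>n. coeff p n \<in> F}"
proof -
  have "coeffs ` {p :: real poly. \<forall>n. coeff p n \<in> F} \<subseteq> lists F"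
    using assms(2) by (auto simp: forall_coeffs_conv[where P="\<lambda>c. c \<in> F"])
  then have "countable (coeffs ` {p :: real poly. \<forall>n. coeff p n \<in> F})"
    using assms(1) countable_lists countable_subset by blast
  moreover have "inj_on coeffs {p :: real poly. \<forall>n. coeff p n \<in> F}"
    by (meson coeffs_eq_iff inj_onI)
  ultimately show ?thesis by (rule countable_image_inj_on)
qed

lemma alg_indep_cong:
  assumes "\<And>j. j \<in> J \<Longrightarrow> x j = y j"
  shows "alg_indep_over_rat J x = alg_indep_over_rat J y"
proof -
  have "\<And>S m. S \<subseteq> J \<Longrightarrow> (\<Prod>j\<in>S. x j ^ m j) = (\<Prod>j\<in>S. y j ^ m j)"
    using assms by (intro prod.cong) auto
  then show ?thesis unfolding alg_indep_over_rat_def by (smt (verit) sum.cong)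
qed

lemma alg_indep_extend1:
  assumes fin: "finite J" and kJ: "k \<notin> J" and ind: "alg_indep_over_rat J x"
  shows "\<exists>t. alg_indep_over_rat (insert k J) (x(k := t))"
proof -
  define P where "P = {p :: real poly. \<forall>n. coeff p n \<in> FF J x}"
  define B where "B = (\<Union>p\<in>P - {0}. {t. poly p t = 0})"
  have "0 \<in> FF J x" unfolding FF_def by (intro CollectI exI[of _ "{}"] exI[of _ "\<lambda>_. 0"]) simp
  then have "countable P" unfolding P_def by (intro countable_polys countable_FF fin)
  then have "countable B" unfolding B_def
    by (intro countable_UN) (auto intro: countable_finite poly_roots_finite)
  then obtain t where t: "t \<notin> B"
    using uncountable_UNIV_real by (metis UNIV_I countable_subset subsetI)
  define y where "y = x(k := t)"
  define S0 where "S0 = insert k J"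
  have "alg_indep_over_rat S0 y"
    unfolding alg_indep_over_rat_def
  proof (intro allI impI)
    fix S M and c :: "('a \<Rightarrow> nat) \<Rightarrow> rat"
    assume a: "finite S \<and> S \<subseteq> S0 \<and> finite M \<and> (\<forall>m\<in>M. \<forall>j. j \<notin> S \<longrightarrow> m j = 0) \<and>
        (\<Sum>m\<in>M. of_rat (c m) * (\<Prod>j\<in>S. y j ^ m j)) = 0"
    have finM: "finite M" using a by blast
    have supp: "\<And>m j. m \<in> M \<Longrightarrow> j \<notin> S0 \<Longrightarrow> m j = 0" using a by blast
    have prodeq: "(\<Prod>j\<in>S. y j ^ m j) = t ^ (m k) * XX J x m" if "m \<in> M" for m
    proof -
      have "(\<Prod>j\<in>S. y j ^ m j) = (\<Prod>j\<in>S0. y j ^ m j)"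
        using a that fin unfolding S0_def by (intro prod.mono_neutral_left) auto
      also have "\<dots> = y k ^ m k * (\<Prod>j\<in>J. y j ^ m j)"
        unfolding S0_def using fin kJ by simp
      also have "(\<Prod>j\<in>J. y j ^ m j) = XX J x m"
        unfolding XX_def y_def using kJ by (intro prod.cong) auto
      finally show ?thesis by (simp add: y_def)
    qed
    define p where "p = (\<Sum>m\<in>M. monom (of_rat (c m) * XX J x m) (m k))"
    have "poly p t = (\<Sum>m\<in>M. of_rat (c m) * (\<Prod>j\<in>S. y j ^ m j))"
      unfolding p_def poly_sum poly_monom by (intro sum.cong) (auto simp: prodeq)
    then have pt: "poly p t = 0" using a by simp
    have coeffp: "coeff p n = (\<Sum>m\<in>{m\<in>M. m k = n}. of_rat (c m) * XX J x m)" for n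
      unfolding p_def coeff_sum coeff_monom using finM
      by (simp add: sum.inter_filter eq_commute)
    define Mn where "Mn n = (\<lambda>m. m(k := 0)) ` {m\<in>M. m k = n}" for n
    define cn where "cn n = (\<lambda>m'. c (m'(k := n)))" for n
    have injn: "inj_on (\<lambda>m. m(k := 0)) {m\<in>M. m k = n}" for n
    proof (rule inj_onI)
      fix m1 m2 assume "m1 \<in> {m\<in>M. m k = n}" "m2 \<in> {m\<in>M. m k = n}" "m1(k := 0) = m2(k := 0)"
      then show "m1 = m2" by (metis (mono_tags, lifting) fun_upd_triv fun_upd_upd mem_Collect_eq)
    qed
    have XXk: "XX J x (m(k := 0)) = XX J x m" for m
      unfolding XX_def using kJ by (intro prod.cong) auto
    have coeffp2: "coeff p n = (\<Sum>m'\<in>Mn n. of_rat (cn n m') * XX J x m')" for n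
      unfolding coeffp Mn_def
      by (subst sum.reindex[OF injn]) (auto simp: cn_def XXk intro!: sum.cong)
    have MnZ: "Mn n \<subseteq> ZZ J" "finite (Mn n)" for n
      unfolding Mn_def ZZ_def using supp finM unfolding S0_def by auto
    have "p \<in> P" unfolding P_def FF_def using coeffp2 MnZ by blast
    with t have "p = 0" using pt unfolding B_def by blast
    show "\<forall>m\<in>M. c m = 0"
    proof
      fix m assume m: "m \<in> M"
      have s0: "(\<Sum>m'\<in>Mn (m k). of_rat (cn (m k) m') * (\<Prod>j\<in>J. x j ^ m' j)) = 0"
        using coeffp2[of "m k"] \<open>p = 0\<close> by (simp add: XX_def)
      have sp: "\<forall>m'\<in>Mn (m k). \<forall>j. j \<notin> J \<longrightarrow> m' j = 0"
        using MnZ(1)[of "m k"] unfolding ZZ_def by blast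
      have imp: "finite J \<and> J \<subseteq> J \<and> finite (Mn (m k)) \<and> (\<forall>m'\<in>Mn (m k). \<forall>j. j \<notin> J \<longrightarrow> m' j = 0) \<and>
        (\<Sum>m'\<in>Mn (m k). of_rat (cn (m k) m') * (\<Prod>j\<in>J. x j ^ m' j)) = 0
        \<longrightarrow> (\<forall>m'\<in>Mn (m k). cn (m k) m' = 0)"
        by (rule spec[OF spec[OF spec[OF ind[unfolded alg_indep_over_rat_def], of J], of "Mn (m k)"], of "cn (m k)"])
      have all0: "\<forall>m'\<in>Mn (m k). cn (m k) m' = 0"
        by (rule mp[OF imp]) (intro conjI fin order_refl MnZ(2) sp s0)
      have mem: "m(k := 0) \<in> Mn (m k)" unfolding Mn_def using m by auto
      have "cn (m k) (m(k := 0)) = c m" unfolding cn_def by simp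
      then show "c m = 0" using all0 mem by metis
    qed
  qed
  then show ?thesis unfolding y_def S0_def by blast
qed

lemma alg_indep_extend:
  assumes "finite K" "finite J" "J \<inter> K = {}" "alg_indep_over_rat J x"
  shows "\<exists>y. alg_indep_over_rat (J \<union> K) y \<and> (\<forall>j\<in>J. y j = x j)"
  using assms
proof (induction K rule: finite_induct)
  case empty
  then show ?case by auto
next
  case (insert k K)
  then obtain y where y: "alg_indep_over_rat (J \<union> K) y" "\<forall>j\<in>J. y j = x j" by auto
  have "k \<notin> J \<union> K" using insert by auto
  moreover have "finite (J \<union> K)" using insert by auto
  ultimately obtain t where "alg_indep_over_rat (insert k (J \<union> K)) (y(k := t))"
    using alg_indep_extend1[OF _ _ y(1)] by blast
  moreover have "\<forall>j\<in>J. (y(k := t)) j = x j" using y insert by auto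
  ultimately show ?case by auto
qed



lemma reflection_exists:
  fixes a b :: "'a::real_inner"
  shows "\<exists>R. (\<forall>x y. dist (R x) (R y) = dist x y) \<and> R a = b \<and> (\<forall>x. dist x a = dist x b \<longrightarrow> R x = x)"
proof (cases "a = b")
  case True
  then show ?thesis by (intro exI[of _ id]) auto
next
  case False
  define n where "n = a - b"
  define m where "m = (1/2) *\<^sub>R (a + b)"
  define R where "R x = x - (2 * ((x - m) \<bullet> n) / (n \<bullet> n)) *\<^sub>R n" for x
  have nn: "n \<bullet> n \<noteq> 0" using False unfolding n_def by simp
  have iso: "dist (R x) (R y) = dist x y" for x y
  proof -
    define c where "c = 2 * ((x - y) \<bullet> n) / (n \<bullet> n)"
    have "R x - R y = (x - y) - c *\<^sub>R n"
      unfolding R_def c_def by (simp add: inner_diff_left algebra_simps diff_divide_distrib)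
    then have "(norm (R x - R y))\<^sup>2 = (norm ((x - y) - c *\<^sub>R n))\<^sup>2" by simp
    also have "\<dots> = (norm (x - y))\<^sup>2 - 2 * c * ((x - y) \<bullet> n) + c\<^sup>2 * (n \<bullet> n)"
    proof -
      define v where "v = x - y"
      have "(norm (v - c *\<^sub>R n))\<^sup>2 = (norm v)\<^sup>2 - 2 * c * (v \<bullet> n) + c\<^sup>2 * (n \<bullet> n)"
        unfolding power2_norm_eq_inner
        by (simp add: inner_diff_left inner_diff_right inner_commute power2_eq_square algebra_simps)
      then show ?thesis unfolding v_def .
    qed
    also have "\<dots> = (norm (x - y))\<^sup>2"
      unfolding c_def using nn by (simp add: power2_eq_square field_simps)
    finally show ?thesis by (simp add: dist_norm)
  qed
  have Ra: "R a = b"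
  proof -
    have "a - m = (1/2) *\<^sub>R n"
    proof -
      have "a = (1/2) *\<^sub>R (a + a)" by simp
      then have "a - m = (1/2) *\<^sub>R (a + a) - (1/2) *\<^sub>R (a + b)" unfolding m_def by simp
      also have "\<dots> = (1/2) *\<^sub>R n" unfolding n_def by (simp only: scaleR_diff_right[symmetric]) simp
      finally show ?thesis .
    qed
    then have "(a - m) \<bullet> n = (n \<bullet> n) / 2" by simp
    then have eq2: "2 * ((a - m) \<bullet> n) = n \<bullet> n" by simp
    have "2 * ((a - m) \<bullet> n) / (n \<bullet> n) = 1" by (simp only: eq2) (rule divide_self[OF nn])
    then have "R a = a - 1 *\<^sub>R n" unfolding R_def by (simp only:)
    then show ?thesis by (simp add: n_def)
  qed
  have fixR: "R x = x" if "dist x a = dist x b" for x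
  proof -
    have "(norm (x - a))\<^sup>2 = (norm (x - b))\<^sup>2" using that by (simp add: dist_norm)
    then have "x \<bullet> x - 2 * (x \<bullet> a) + a \<bullet> a = x \<bullet> x - 2 * (x \<bullet> b) + b \<bullet> b"
      by (simp add: power2_norm_eq_inner inner_diff_left inner_diff_right inner_commute)
    then have "(x - m) \<bullet> n = 0"
      unfolding m_def n_def by (simp add: inner_diff_left inner_diff_right inner_add_left inner_add_right inner_commute algebra_simps)
    then show ?thesis unfolding R_def by simp
  qed
  show ?thesis using iso Ra fixR by blast
qed

lemma isometry_extend_finite:
  fixes a b :: "'i \<Rightarrow> 'a::real_inner"
  assumes "finite H" "\<forall>h\<in>H. \<forall>k\<in>H. dist (a h) (a k) = dist (b h) (b k)"
  shows "\<exists>g. (\<forall>x y. dist (g x) (g y) = dist x y) \<and> (\<forall>h\<in>H. g (a h) = b h)"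
  using assms
proof (induction H rule: finite_induct)
  case empty
  then show ?case by (intro exI[of _ id]) auto
next
  case (insert h H)
  then obtain g where g: "\<forall>x y. dist (g x) (g y) = dist x y" "\<forall>k\<in>H. g (a k) = b k" by auto
  obtain R where R: "\<forall>x y. dist (R x) (R y) = dist x y" "R (g (a h)) = b h"
      "\<forall>x. dist x (g (a h)) = dist x (b h) \<longrightarrow> R x = x"
    using reflection_exists by blast
  have "\<forall>k\<in>H. R (b k) = b k"
  proof
    fix k assume k: "k \<in> H"
    have "dist (b k) (g (a h)) = dist (g (a k)) (g (a h))" using g k by simp
    also have "\<dots> = dist (a k) (a h)" using g by simp
    also have "\<dots> = dist (b k) (b h)" using insert.prems k by simp
    finally show "R (b k) = b k" using R by blast
  qed
  then show ?case using g R by (intro exI[of _ "R \<circ> g"]) auto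
qed


theorem proposition8:
  fixes V :: "'a set" and E :: "'a set set" and H :: "'a set" and v' :: 'a
  assumes "simple_graph V E"
    and "H \<subseteq> V" and "is_clique E H"
    and "v' \<notin> V"
    and "gen_globally_rigid (insert v' V) (E \<union> {{v', h} | h. h \<in> H}) TYPE('d::finite)"
  shows "gen_globally_rigid V E TYPE('d)"
  unfolding gen_globally_rigid_def
proof (intro allI impI)
  fix p :: "'a \<Rightarrow> real ^ 'd"
  assume gp: "generic_config V p"
  have finV: "finite V" using assms(1) unfolding simple_graph_def by blast
  have Eedge: "u \<in> V \<and> w \<in> V" if "{u, w} \<in> E" for u w
    using assms(1) that unfolding simple_graph_def by blast
  let ?J = "V \<times> (UNIV :: 'd set)"
  let ?K = "{v'} \<times> (UNIV :: 'd set)"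
  have "alg_indep_over_rat ?J (\<lambda>(v, i). p v $ i)" using gp unfolding generic_config_def .
  moreover have "finite ?K" "finite ?J" "?J \<inter> ?K = {}" using finV assms(4) by auto
  ultimately obtain y where y: "alg_indep_over_rat (?J \<union> ?K) y"
      "\<forall>j\<in>?J. y j = (\<lambda>(v, i). p v $ i) j"
    using alg_indep_extend by blast
  define p' where "p' = p(v' := (\<chi> i. y (v', i)))"
  have "alg_indep_over_rat (insert v' V \<times> (UNIV :: 'd set)) (\<lambda>(v, i). p' v $ i)"
  proof -
    have eqset: "insert v' V \<times> (UNIV :: 'd set) = ?J \<union> ?K" by auto
    have "\<And>j. j \<in> ?J \<union> ?K \<Longrightarrow> (\<lambda>(v, i). p' v $ i) j = y j"
      using y(2) assms(4) unfolding p'_def by auto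
    then show ?thesis unfolding eqset using alg_indep_cong y(1) by blast
  qed
  then have gp': "generic_config (insert v' V) p'" unfolding generic_config_def .
  have rig: "globally_rigid (insert v' V) (E \<union> {{v', h} | h. h \<in> H}) p'"
    using assms(5) gp' unfolding gen_globally_rigid_def by blast
  show "globally_rigid V E p"
    unfolding globally_rigid_def
  proof (intro allI impI)
    fix q :: "'a \<Rightarrow> real ^ 'd"
    assume eq: "equivalent_frameworks E p q"
    have cl: "\<forall>h\<in>H. \<forall>k\<in>H. dist (p h) (p k) = dist (q h) (q k)"
    proof (intro ballI)
      fix h k assume "h \<in> H" "k \<in> H"
      then show "dist (p h) (p k) = dist (q h) (q k)"
        using assms(3) eq unfolding is_clique_def equivalent_frameworks_def
        by (cases "h = k") auto
    qed
    have finH: "finite H" using finV assms(2) finite_subset by blast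
    obtain g where g: "\<forall>x y. dist (g x) (g y) = dist x y" "\<forall>h\<in>H. g (p h) = q h"
      using isometry_extend_finite[OF finH cl] by blast
    define q' where "q' = q(v' := g (p' v'))"
    have pv: "p' u = p u" "q' u = q u" if "u \<in> V" for u
      using that assms(4) unfolding p'_def q'_def by auto
    have "equivalent_frameworks (E \<union> {{v', h} | h. h \<in> H}) p' q'"
      unfolding equivalent_frameworks_def
    proof (intro allI impI)
      fix u w assume uw: "{u, w} \<in> E \<union> {{v', h} | h. h \<in> H}"
      show "dist (p' u) (p' w) = dist (q' u) (q' w)"
      proof (cases "{u, w} \<in> E")
        case True
        then have "u \<in> V" "w \<in> V" using Eedge by auto
        then show ?thesis using eq True pv unfolding equivalent_frameworks_def by simp
      next
        case False
        then obtain h where h: "h \<in> H" "{u, w} = {v', h}" using uw by blast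
        have hV: "h \<in> V" using h assms(2) by blast
        have key: "dist (p' v') (p' h) = dist (q' v') (q' h)"
        proof -
          have "dist (q' v') (q' h) = dist (g (p' v')) (g (p h))"
            using g(2) h(1) hV pv unfolding q'_def by simp
          also have "\<dots> = dist (p' v') (p' h)" using g(1) pv hV by simp
          finally show ?thesis by simp
        qed
        from h(2) have "(u = v' \<and> w = h) \<or> (u = h \<and> w = v')" by (auto simp: doubleton_eq_iff)
        then show ?thesis using key by (auto simp: dist_commute)
      qed
    qed
    then have "congruent_frameworks (insert v' V) p' q'"
      using rig unfolding globally_rigid_def by blast
    then show "congruent_frameworks V p q"
      unfolding congruent_frameworks_def using pv by auto
  qed
qed

end
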